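(* Let $m=x_{i_1}\cdots x_{i_s}$ ($i_1\le\dots\le i_s$, $s\ge1$) be a monomial of $S=k[x_1,\dots,x_n]$ and $B=\mathrm{Borel}(m)$. For $0\le d\le s-1$ let $c_d$ be the number of minimal monomial generators of $\operatorname{trunc}_d(B)$ of degree $d$ (so $c_0=1$). Then the Hilbert series of $S/B$ is \[\mathrm{HS}(S/B)=\sum_{d=0}^{s-1}\frac{c_d\,t^d}{(1-t)^{\,n-i_{d+1}}},\] and the multiplicity of $S/B$ is $e(S/B)=\sum_{d:\ i_{d+1}=i_1}c_d$.
   Context: $\mathrm{Borel}(m)$ is the smallest monomial ideal containing $m$ closed under Borel moves $\mu\mapsto\mu\frac{x_{a_1}}{x_{b_1}}\cdots\frac{x_{a_r}}{x_{b_r}}$ ($a_t<b_t$, all $x_{b_t}\mid\mu$). For a monomial $\mu=x_{k_1}\cdots x_{k_r}$ ($k_1\le\dots\le k_r$), $\operatorname{trunc}_d(\mu)=x_{k_1}\cdots x_{k_d}$ if $d\le r$ and $=\mu$ otherwise; $\operatorname{trunc}_d(I)$ is the ideal generated by the $d$-truncations of the monomials of $I$, with $\operatorname{trunc}_0(B)=(1)$. *)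

theory Defs
  imports "HOL-Library.Multiset" "HOL-Computational_Algebra.Formal_Power_Series"
    "HOL-Computational_Algebra.Polynomial" "HOL-Computational_Algebra.Polynomial_FPS"
begin

text \<open>A monomial x_{k_1}...x_{k_r} of S = k[x_1,...,x_n] is the multiset of its variable
  indices {#k_1,...,k_r#}; divisibility is multiset inclusion. A monomial ideal is identified
  with the set of monomials it contains.\<close>

definition monomials :: "nat \<Rightarrow> nat multiset set" where
  "monomials n = {\<mu>. set_mset \<mu> \<subseteq> {1..n}}"

text \<open>Borel(m): smallest monomial ideal containing m closed under Borel moves
  (a general Borel move is an iteration of elementary moves x_a/x_b, a<b, x_b | mu).\<close>
inductive_set Borel :: "nat \<Rightarrow> nat multiset \<Rightarrow> nat multiset set" for n m where
  gen: "m \<in> Borel n m"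
| mult: "\<mu> \<in> Borel n m \<Longrightarrow> j \<in> {1..n} \<Longrightarrow> \<mu> + {#j#} \<in> Borel n m"
| move: "\<mu> \<in> Borel n m \<Longrightarrow> b \<in># \<mu> \<Longrightarrow> 1 \<le> a \<Longrightarrow> a < b
           \<Longrightarrow> \<mu> - {#b#} + {#a#} \<in> Borel n m"

definition trunc_mono :: "nat \<Rightarrow> nat multiset \<Rightarrow> nat multiset" where
  "trunc_mono d \<mu> = mset (take d (sorted_list_of_multiset \<mu>))"

definition ideal_gen :: "nat \<Rightarrow> nat multiset set \<Rightarrow> nat multiset set" where
  "ideal_gen n G = {\<nu> \<in> monomials n. \<exists>g\<in>G. g \<subseteq># \<nu>}"

definition trunc_ideal :: "nat \<Rightarrow> nat \<Rightarrow> nat multiset set \<Rightarrow> nat multiset set" where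
  "trunc_ideal n d I = ideal_gen n (trunc_mono d ` I)"

definition min_gens :: "nat multiset set \<Rightarrow> nat multiset set" where
  "min_gens I = {\<mu> \<in> I. \<forall>\<nu>\<in>I. \<nu> \<subseteq># \<mu> \<longrightarrow> \<nu> = \<mu>}"

definition hilbert_series :: "nat \<Rightarrow> nat multiset set \<Rightarrow> rat fps" where
  "hilbert_series n I = Abs_fps (\<lambda>D. of_nat (card {\<mu> \<in> monomials n. size \<mu> = D \<and> \<mu> \<notin> I}))"

definition multiplicity :: "rat fps \<Rightarrow> rat" where
  "multiplicity h = (THE e. \<exists>Q \<delta>. poly Q 1 \<noteq> 0 \<and>
      h = fps_of_poly Q / (1 - fps_X) ^ \<delta> \<and> e = poly Q 1)"

end

theory Submission
  imports Defs
begin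


abbreviation sl :: "nat multiset \<Rightarrow> nat list" where "sl \<equiv> sorted_list_of_multiset"

definition domE :: "nat list \<Rightarrow> nat multiset \<Rightarrow> bool" where
 "domE i \<mu> \<longleftrightarrow> (\<exists>k. length k = length i \<and> mset k \<subseteq># \<mu> \<and> (\<forall>j<length i. k!j \<le> i!j))"

definition domS :: "nat list \<Rightarrow> nat multiset \<Rightarrow> bool" where
 "domS i \<mu> \<longleftrightarrow> length i \<le> size \<mu> \<and> (\<forall>j<length i. sl \<mu> ! j \<le> i!j)"

lemma Borel_monomials:
  assumes "set i \<subseteq> {1..n}" "\<mu> \<in> Borel n (mset i)" shows "\<mu> \<in> monomials n"
  using assms(2)
proof induct
  case gen then show ?case using assms(1) by (auto simp: monomials_def)
next
  case (mult \<mu> j) then show ?case by (auto simp: monomials_def)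
next
  case (move \<mu> b a)
  then have "b \<le> n" by (auto simp: monomials_def)
  with move show ?case by (auto simp: monomials_def dest: in_diffD)
qed

lemma Borel_domE:
  assumes "\<mu> \<in> Borel n (mset i)" shows "domE i \<mu>"
  using assms
proof induct
  case gen show ?case unfolding domE_def by (rule exI[of _ i]) auto
next
  case (mult \<mu> j) then show ?case unfolding domE_def
    by (meson subset_mset.order_trans mset_subset_eq_add_left)
next
  case (move \<mu> b a)
  from move(2) obtain k where k: "length k = length i" "mset k \<subseteq># \<mu>" "\<forall>j<length i. k!j \<le> i!j"
    unfolding domE_def by blast
  show ?case
  proof (cases "b \<in> set k")
    case True
    then obtain p where p: "p < length k" "k!p = b" by (auto simp: in_set_conv_nth)
    define k' where "k' = k[p := a]"
    have "mset k' = mset k - {#b#} + {#a#}" using p by (simp add: k'_def mset_update)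
    moreover have "mset k - {#b#} \<subseteq># \<mu> - {#b#}" using k(2) by (simp add: subseteq_mset_def diff_le_mono)
    ultimately have "mset k' \<subseteq># \<mu> - {#b#} + {#a#}" by simp
    moreover have "\<forall>j<length i. k'!j \<le> i!j"
    proof (intro allI impI)
      fix j assume j: "j < length i"
      show "k'!j \<le> i!j"
      proof (cases "j = p")
        case True
        then have "k'!j = a" using p by (simp add: k'_def)
        moreover have "b \<le> i!p" using k(3) p j True by auto
        ultimately show ?thesis using True move(5) by simp
      next
        case False
        then show ?thesis using k(3) j by (simp add: k'_def)
      qed
    qed
    moreover have "length k' = length i" using k by (simp add: k'_def)
    ultimately show ?thesis unfolding domE_def by blast
  next
    case False
    have "mset k \<subseteq># \<mu> - {#b#}" unfolding subseteq_mset_def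
    proof
      fix x
      have c0: "count (mset k) b = 0" by (metis False count_eq_zero_iff set_mset_mset)
      show "count (mset k) x \<le> count (\<mu> - {#b#}) x"
      proof (cases "x = b")
        case True then show ?thesis by (metis c0 zero_le)
      next
        case False then show ?thesis using k(2)[unfolded subseteq_mset_def, rule_format, of x] by simp
      qed
    qed
    then have "mset k \<subseteq># \<mu> - {#b#} + {#a#}" by (meson subset_mset.order_trans mset_subset_eq_add_left)
    then show ?thesis using k unfolding domE_def by blast
  qed
qed

lemma moves_reach:
  assumes "length k = length i" "\<forall>j<length i. k!j \<le> i!j" "set k \<subseteq> {1..n}"
  shows "mset (take j k @ drop j i) \<in> Borel n (mset i)"
proof (induction j)
  case 0 then show ?case by (simp add: Borel.gen)
next
  case (Suc j)
  show ?case
  proof (cases "j < length i")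
    case False
    then have "take (Suc j) k @ drop (Suc j) i = take j k @ drop j i" using assms(1) by simp
    then show ?thesis using Suc by metis
  next
    case True
    have tk: "take (Suc j) k = take j k @ [k!j]" using True assms(1) by (simp add: take_Suc_conv_app_nth)
    have di: "drop j i = i!j # drop (Suc j) i" using True by (simp add: Cons_nth_drop_Suc)
    have kj: "k!j \<le> i!j" using assms(2) True by simp
    have "k!j \<in> set k" using True assms(1) by simp
    then have k1: "1 \<le> k!j" using assms(3) by auto
    define M where "M = mset (take j k @ drop (Suc j) i)"
    have M1: "mset (take j k @ drop j i) = M + {#i!j#}" unfolding M_def di by simp
    have M2: "mset (take (Suc j) k @ drop (Suc j) i) = M + {#k!j#}" unfolding M_def tk by simp
    show ?thesis
    proof (cases "k!j = i!j")
      case True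
      then show ?thesis using Suc M1 M2 by metis
    next
      case False
      then have lt: "k!j < i!j" using kj by simp
      have "M + {#i!j#} \<in> Borel n (mset i)" using Suc M1 by metis
      then have "M + {#i!j#} - {#i!j#} + {#k!j#} \<in> Borel n (mset i)"
        by (rule Borel.move) (use k1 lt in auto)
      then show ?thesis using M2 by simp
    qed
  qed
qed

lemma Borel_add:
  assumes "\<nu> \<in> Borel n m" shows "set_mset \<rho> \<subseteq> {1..n} \<Longrightarrow> \<nu> + \<rho> \<in> Borel n m"
proof (induction \<rho>)
  case empty then show ?case using assms by simp
next
  case (add x \<rho>)
  then have "\<nu> + \<rho> + {#x#} \<in> Borel n m" by (intro Borel.mult) auto
  then show ?case by simp
qed

lemma Borel_char:
  assumes "set i \<subseteq> {1..n}"
  shows "Borel n (mset i) = {\<mu> \<in> monomials n. domE i \<mu>}"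
proof safe
  fix \<mu> assume "\<mu> \<in> Borel n (mset i)"
  then show "\<mu> \<in> monomials n" "domE i \<mu>" using Borel_monomials[OF assms] Borel_domE by auto
next
  fix \<mu> assume m: "\<mu> \<in> monomials n" "domE i \<mu>"
  then obtain k where k: "length k = length i" "mset k \<subseteq># \<mu>" "\<forall>j<length i. k!j \<le> i!j"
    unfolding domE_def by blast
  have sk: "set k \<subseteq> {1..n}" using k(2) m(1) unfolding monomials_def
    by (metis mset_subset_eqD set_mset_mset subset_iff mem_Collect_eq)
  have "mset (take (length i) k @ drop (length i) i) \<in> Borel n (mset i)"
    by (rule moves_reach[OF k(1) k(3) sk])
  then have "mset k \<in> Borel n (mset i)" using k(1) by simp
  then have "mset k + (\<mu> - mset k) \<in> Borel n (mset i)"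
    by (rule Borel_add) (use m(1) in \<open>auto simp: monomials_def dest: in_diffD\<close>)
  then show "\<mu> \<in> Borel n (mset i)" using k(2) by simp
qed

lemma sorted_filter_nth:
  "sorted xs \<Longrightarrow> j < length (filter (\<lambda>y. y \<le> x) xs) \<Longrightarrow> xs!j \<le> (x::nat)"
proof (induction xs arbitrary: j)
  case Nil then show ?case by simp
next
  case (Cons a ys)
  show ?case
  proof (cases "a \<le> x")
    case True
    then show ?thesis using Cons by (cases j) auto
  next
    case False
    then have "filter (\<lambda>y. y \<le> x) (a # ys) = []" using Cons(2) by (auto simp: filter_empty_conv)
    then show ?thesis using Cons(3) by simp
  qed
qed

lemma size_filter_sl: "size (filter_mset P \<mu>) = length (filter P (sl \<mu>))"
proof -
  have "filter_mset P \<mu> = mset (filter P (sl \<mu>))" by (metis mset_filter mset_sorted_list_of_multiset)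
  then show ?thesis by (metis size_mset)
qed

lemma len_sl: "length (sl \<nu>) = size \<nu>"
  by (metis size_mset mset_sorted_list_of_multiset)

lemma len_take_sub: "mset (take d (sl \<mu>)) \<subseteq># \<mu>"
  by (metis append_take_drop_id mset_append mset_sorted_list_of_multiset mset_subset_eq_add_left)

lemma domE_domS:
  assumes "sorted i" shows "domE i \<mu> \<longleftrightarrow> domS i \<mu>"
proof
  assume "domE i \<mu>"
  then obtain k where k: "length k = length i" "mset k \<subseteq># \<mu>" "\<forall>j<length i. k!j \<le> i!j"
    unfolding domE_def by blast
  have "length i \<le> size \<mu>" using k size_mset_mono by fastforce
  moreover have "sl \<mu> ! j \<le> i!j" if j: "j < length i" for j
  proof -
    have all: "\<forall>y\<in>set (take (Suc j) k). y \<le> i!j"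
    proof
      fix y assume "y \<in> set (take (Suc j) k)"
      then obtain p where p: "p < length (take (Suc j) k)" "take (Suc j) k ! p = y"
        by (auto simp: in_set_conv_nth)
      then have "p \<le> j" "y = k!p" by auto
      then show "y \<le> i!j" using k(3) j assms p by (meson le_less_trans order_trans sorted_nth_mono)
    qed
    have "mset (take (Suc j) k) \<subseteq># mset k" by (metis append_take_drop_id mset_append mset_subset_eq_add_left)
    then have "mset (take (Suc j) k) \<subseteq># \<mu>" using k(2) by (meson subset_mset.order_trans)
    then have "filter_mset (\<lambda>y. y \<le> i!j) (mset (take (Suc j) k)) \<subseteq># filter_mset (\<lambda>y. y \<le> i!j) \<mu>"
      by (rule multiset_filter_mono)
    moreover have "filter_mset (\<lambda>y. y \<le> i!j) (mset (take (Suc j) k)) = mset (take (Suc j) k)"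
      using all by (simp add: filter_mset_eq_conv)
    moreover have "size (mset (take (Suc j) k)) = Suc j" using k(1) j by simp
    ultimately have "Suc j \<le> size (filter_mset (\<lambda>y. y \<le> i!j) \<mu>)"
      by (metis size_mset_mono)
    then show ?thesis using sorted_filter_nth[of "sl \<mu>" j "i!j"] size_filter_sl by simp
  qed
  ultimately show "domS i \<mu>" unfolding domS_def by blast
next
  assume "domS i \<mu>"
  then show "domE i \<mu>" unfolding domS_def domE_def
    by (intro exI[of _ "take (length i) (sl \<mu>)"])
       (auto simp: len_take_sub len_sl)
qed



definition G :: "nat \<Rightarrow> nat list \<Rightarrow> nat \<Rightarrow> nat multiset set" where
 "G n i d = {\<nu>. set_mset \<nu> \<subseteq> {1..n} \<and> size \<nu> = d \<and> (\<forall>j<d. sl \<nu> ! j \<le> i!j)}"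

lemma sl_mset_sorted: "sorted xs \<Longrightarrow> sl (mset xs) = xs"
  by (simp add: sorted_sort_id)

lemma sl_append: "sorted (xs @ ys) \<Longrightarrow> sl (mset xs + mset ys) = xs @ ys"
  using sl_mset_sorted[of "xs @ ys"] by simp


lemma trunc_image:
  assumes "sorted i" "set i \<subseteq> {1..n}" "d \<le> length i"
  shows "trunc_mono d ` {\<mu> \<in> monomials n. domS i \<mu>} = G n i d"
proof (intro equalityI subsetI)
  fix x assume "x \<in> trunc_mono d ` {\<mu> \<in> monomials n. domS i \<mu>}"
  then obtain \<mu> where m: "\<mu> \<in> monomials n" "domS i \<mu>" and x: "x = trunc_mono d \<mu>" by blast
  have slt: "sl (trunc_mono d \<mu>) = take d (sl \<mu>)" unfolding trunc_mono_def
    by (rule sl_mset_sorted) (simp add: sorted_wrt_take)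
  have sz: "size (trunc_mono d \<mu>) = d" using m(2) assms(3) unfolding trunc_mono_def domS_def
    by (simp add: len_sl)
  have "set (take d (sl \<mu>)) \<subseteq> set_mset \<mu>" using set_take_subset[of d "sl \<mu>"] by simp
  then have st: "set_mset (trunc_mono d \<mu>) \<subseteq> {1..n}" using m(1) unfolding trunc_mono_def monomials_def
    by auto
  have "\<forall>j<d. sl (trunc_mono d \<mu>) ! j \<le> i!j" using m(2) assms(3) unfolding slt domS_def by auto
  then show "x \<in> G n i d" using sz st x unfolding G_def by blast
next
  fix \<nu> assume "\<nu> \<in> G n i d"
  then have \<nu>: "set_mset \<nu> \<subseteq> {1..n}" "size \<nu> = d" "\<forall>j<d. sl \<nu> ! j \<le> i!j" unfolding G_def by auto
  have len: "length (sl \<nu>) = d" using \<nu>(2) len_sl by simp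
  have srt: "sorted (sl \<nu> @ drop d i)"
    unfolding sorted_append
  proof (intro conjI ballI)
    show "sorted (sl \<nu>)" by simp
    show "sorted (drop d i)" using assms(1) by (simp add: sorted_wrt_drop)
    fix x y assume x: "x \<in> set (sl \<nu>)" and y: "y \<in> set (drop d i)"
    obtain p where p: "p < d" "x = sl \<nu> ! p" using x len by (metis in_set_conv_nth)
    obtain q where q: "q < length i - d" "y = drop d i ! q" using y by (metis in_set_conv_nth length_drop)
    have "y = i ! (d + q)" using q assms(3) by simp
    moreover have "x \<le> i!p" using p \<nu>(3) by simp
    moreover have "i!p \<le> i!(d+q)" using assms(1) p q by (intro sorted_nth_mono) auto
    ultimately show "x \<le> y" by simp
  qed
  define \<mu> where "\<mu> = \<nu> + mset (drop d i)"
  have slm: "sl \<mu> = sl \<nu> @ drop d i" unfolding \<mu>_def using sl_append[OF srt] by simp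
  have "domS i \<mu>" unfolding domS_def
  proof
    show "length i \<le> size \<mu>" using \<nu>(2) assms(3) unfolding \<mu>_def by simp
    show "\<forall>j<length i. sl \<mu> ! j \<le> i ! j"
    proof (intro allI impI)
      fix j assume j: "j < length i"
      show "sl \<mu> ! j \<le> i ! j"
      proof (cases "j < d")
        case True then show ?thesis using \<nu>(3) len by (simp add: slm nth_append)
      next
        case False then show ?thesis using len j by (simp add: slm nth_append)
      qed
    qed
  qed
  moreover have "\<mu> \<in> monomials n" unfolding \<mu>_def monomials_def using \<nu>(1) assms(2)
    by (auto dest: in_set_dropD)
  moreover have "trunc_mono d \<mu> = \<nu>" unfolding trunc_mono_def slm using len by simp
  ultimately show "\<nu> \<in> trunc_mono d ` {\<mu> \<in> monomials n. domS i \<mu>}" by blast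
qed

lemma min_gens_char:
  assumes "GG \<subseteq> monomials n" "\<forall>g\<in>GG. size g = d"
  shows "{\<mu> \<in> min_gens (ideal_gen n GG). size \<mu> = d} = GG"
proof (intro equalityI subsetI)
  fix \<mu> assume "\<mu> \<in> {\<mu> \<in> min_gens (ideal_gen n GG). size \<mu> = d}"
  then have m: "\<mu> \<in> ideal_gen n GG" "\<forall>\<nu>\<in>ideal_gen n GG. \<nu> \<subseteq># \<mu> \<longrightarrow> \<nu> = \<mu>" by (auto simp: min_gens_def)
  then obtain g where g: "g \<in> GG" "g \<subseteq># \<mu>" unfolding ideal_gen_def by blast
  have "g \<in> ideal_gen n GG" using g assms(1) unfolding ideal_gen_def by blast
  then have "g = \<mu>" using m(2) g(2) by blast
  then show "\<mu> \<in> GG" using g by simp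
next
  fix \<mu> assume \<mu>: "\<mu> \<in> GG"
  have "\<mu> \<in> ideal_gen n GG" using \<mu> assms(1) unfolding ideal_gen_def by blast
  moreover have "\<nu> = \<mu>" if a: "\<nu> \<in> ideal_gen n GG" "\<nu> \<subseteq># \<mu>" for \<nu>
  proof -
    obtain g where g: "g \<in> GG" "g \<subseteq># \<nu>" using a(1) unfolding ideal_gen_def by blast
    have "g \<subseteq># \<mu>" using g(2) a(2) by (rule subset_mset.order_trans)
    moreover have "size g = size \<mu>" using assms(2) g(1) \<mu> by simp
    ultimately have "g = \<mu>" by (metis mset_subset_size subset_mset.le_imp_less_or_eq less_irrefl)
    then show ?thesis using g(2) a(2) by (simp add: subset_mset.antisym)
  qed
  ultimately show "\<mu> \<in> {\<mu> \<in> min_gens (ideal_gen n GG). size \<mu> = d}" using assms(2) \<mu>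
    by (auto simp: min_gens_def)
qed

lemma Borel_domS:
  assumes "sorted i" "set i \<subseteq> {1..n}"
  shows "Borel n (mset i) = {\<mu> \<in> monomials n. domS i \<mu>}"
  using Borel_char[OF assms(2)] domE_domS[OF assms(1)] by auto

lemma c_eq:
  assumes "sorted i" "set i \<subseteq> {1..n}" "d \<le> length i"
  shows "{\<mu> \<in> min_gens (trunc_ideal n d (Borel n (mset i))). size \<mu> = d} = G n i d"
proof -
  have "trunc_ideal n d (Borel n (mset i)) = ideal_gen n (G n i d)"
    unfolding trunc_ideal_def Borel_domS[OF assms(1,2)] trunc_image[OF assms] ..
  moreover have "G n i d \<subseteq> monomials n" "\<forall>g\<in>G n i d. size g = d" unfolding G_def monomials_def by auto
  ultimately show ?thesis using min_gens_char by simp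
qed

lemma sl_sum:
  assumes "sorted i" "d < length i" "\<nu> \<in> G n i d" "set_mset \<tau> \<subseteq> {i!d<..n}"
  shows "sl (\<nu> + \<tau>) = sl \<nu> @ sl \<tau>"
proof -
  have \<nu>: "size \<nu> = d" "\<forall>j<d. sl \<nu> ! j \<le> i!j" using assms(3) unfolding G_def by auto
  have len: "length (sl \<nu>) = d" using \<nu>(1) len_sl by simp
  have "sorted (sl \<nu> @ sl \<tau>)" unfolding sorted_append
  proof (intro conjI ballI)
    show "sorted (sl \<nu>)" "sorted (sl \<tau>)" by simp_all
    fix x y assume x: "x \<in> set (sl \<nu>)" and y: "y \<in> set (sl \<tau>)"
    obtain p where p: "p < d" "x = sl \<nu> ! p" using x len by (metis in_set_conv_nth)
    have "x \<le> i!p" using p \<nu>(2) by simp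
    moreover have "i!p \<le> i!d" using assms(1,2) p by (intro sorted_nth_mono) auto
    moreover have "i!d < y" using y assms(4) by auto
    ultimately show "x \<le> y" by simp
  qed
  then show ?thesis using sl_append[of "sl \<nu>" "sl \<tau>"] by simp
qed

definition P where
  "P n i d D = (\<lambda>(\<nu>,\<tau>). \<nu> + \<tau>) ` (G n i d \<times> multisets_of_size {i!d<..n} (D - d))"

lemma decomp:
  assumes "sorted i" "set i \<subseteq> {1..n}"
  shows "{\<mu> \<in> monomials n. size \<mu> = D \<and> \<not> domS i \<mu>} = (\<Union>d\<in>{d. d < length i \<and> d \<le> D}. P n i d D)"
proof (intro equalityI subsetI)
  fix \<mu> assume "\<mu> \<in> {\<mu> \<in> monomials n. size \<mu> = D \<and> \<not> domS i \<mu>}"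
  then have m: "set_mset \<mu> \<subseteq> {1..n}" "size \<mu> = D" "\<not> domS i \<mu>" by (auto simp: monomials_def)
  define xs where "xs = sl \<mu>"
  have lxs: "length xs = size \<mu>" unfolding xs_def by (rule len_sl)
  define Q where "Q = (\<lambda>j. j < length i \<and> (size \<mu> \<le> j \<or> i!j < xs!j))"
  have ex: "\<exists>j. Q j"
  proof (cases "length i \<le> size \<mu>")
    case True
    then show ?thesis using m(3) unfolding domS_def Q_def xs_def by (auto simp: not_le)
  next
    case False
    then show ?thesis unfolding Q_def by (intro exI[of _ "size \<mu>"]) auto
  qed
  define d where "d = (LEAST j. Q j)"
  have Qd: "Q d" unfolding d_def using ex by (rule LeastI_ex)
  have before: "j < size \<mu> \<and> xs!j \<le> i!j" if "j < d" for j
  proof -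
    have "\<not> Q j" using not_less_Least[of j Q] that unfolding d_def by blast
    moreover have "j < length i" using Qd that unfolding Q_def by simp
    ultimately show ?thesis unfolding Q_def by auto
  qed
  have dle: "d \<le> size \<mu>" using before[of "size \<mu>"] by (cases "d \<le> size \<mu>") auto
  define \<nu> where "\<nu> = mset (take d xs)"
  define \<tau> where "\<tau> = mset (drop d xs)"
  have mu: "\<mu> = \<nu> + \<tau>" unfolding \<nu>_def \<tau>_def xs_def
    by (metis mset_append append_take_drop_id mset_sorted_list_of_multiset)
  have srt: "sorted xs" unfolding xs_def by simp
  have slnu: "sl \<nu> = take d xs" unfolding \<nu>_def by (rule sl_mset_sorted) (simp add: srt sorted_wrt_take)
  have setxs: "set xs = set_mset \<mu>" unfolding xs_def by simp
  have "\<nu> \<in> G n i d" unfolding G_def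
  proof (intro CollectI conjI allI impI)
    show "set_mset \<nu> \<subseteq> {1..n}" unfolding \<nu>_def using m(1) setxs set_take_subset[of d xs] by auto
    show "size \<nu> = d" unfolding \<nu>_def using dle lxs by simp
    fix j assume "j < d" then show "sl \<nu> ! j \<le> i ! j" unfolding slnu using before by simp
  qed
  moreover have "\<tau> \<in> multisets_of_size {i!d<..n} (D - d)" unfolding multisets_of_size_def
  proof (intro CollectI conjI subsetI)
    show "size \<tau> = D - d" unfolding \<tau>_def using lxs m(2) by simp
    fix y assume "y \<in># \<tau>"
    then have y: "y \<in> set (drop d xs)" unfolding \<tau>_def by simp
    then have dl: "d < length xs" by (metis drop_eq_Nil2 empty_iff empty_set not_le)
    then have "i!d < xs!d" using Qd lxs unfolding Q_def by auto
    moreover obtain q where q: "q < length xs - d" "y = xs ! (d + q)" using y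
      by (metis in_set_conv_nth length_drop nth_drop dl less_imp_le_nat)
    moreover have "xs!d \<le> xs!(d+q)" using srt q by (intro sorted_nth_mono) auto
    moreover have "y \<le> n" using y m(1) setxs set_drop_subset[of d xs] by auto
    ultimately show "y \<in> {i!d<..n}" by auto
  qed
  moreover have "d < length i" "d \<le> D" using Qd dle m(2) unfolding Q_def by auto
  ultimately show "\<mu> \<in> (\<Union>d\<in>{d. d < length i \<and> d \<le> D}. P n i d D)" unfolding P_def mu by blast
next
  fix \<mu> assume "\<mu> \<in> (\<Union>d\<in>{d. d < length i \<and> d \<le> D}. P n i d D)"
  then obtain d \<nu> \<tau> where d: "d < length i" "d \<le> D" and \<nu>: "\<nu> \<in> G n i d"
    and \<tau>: "\<tau> \<in> multisets_of_size {i!d<..n} (D - d)" and mu: "\<mu> = \<nu> + \<tau>" unfolding P_def by auto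
  have \<tau>': "set_mset \<tau> \<subseteq> {i!d<..n}" "size \<tau> = D - d" using \<tau> by (auto simp: multisets_of_size_def)
  have \<nu>': "set_mset \<nu> \<subseteq> {1..n}" "size \<nu> = d" "\<forall>j<d. sl \<nu> ! j \<le> i!j" using \<nu> unfolding G_def by auto
  have len: "length (sl \<nu>) = d" using \<nu>'(2) len_sl by simp
  have sl: "sl \<mu> = sl \<nu> @ sl \<tau>" using sl_sum[OF assms(1) d(1) \<nu> \<tau>'(1)] mu by simp
  have "\<mu> \<in> monomials n" unfolding monomials_def mu using \<nu>'(1) \<tau>'(1) by auto
  moreover have "size \<mu> = D" using d(2) \<nu>'(2) \<tau>'(2) mu by simp
  moreover have "\<not> domS i \<mu>"
  proof
    assume ds: "domS i \<mu>"
    then have "length i \<le> D" using \<open>size \<mu> = D\<close> unfolding domS_def by simp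
    then have "0 < size \<tau>" using \<tau>'(2) d(1) by simp
    then have "sl \<tau> \<noteq> []" using len_sl[of \<tau>] by auto
    then have "sl \<tau> ! 0 \<in># \<tau>" by (metis nth_mem length_greater_0_conv set_sorted_list_of_multiset)
    then have gt: "i!d < sl \<tau> ! 0" using \<tau>'(1) by auto
    have "sl \<mu> ! d = sl \<tau> ! 0" using sl len by (simp add: nth_append)
    moreover have "sl \<mu> ! d \<le> i!d" using ds d(1) unfolding domS_def by simp
    ultimately show False using gt by simp
  qed
  ultimately show "\<mu> \<in> {\<mu> \<in> monomials n. size \<mu> = D \<and> \<not> domS i \<mu>}" by blast
qed

lemma P_disjoint:
  assumes "sorted i" "d1 < d2" "d2 < length i" "d2 \<le> D"
  shows "P n i d1 D \<inter> P n i d2 D = {}"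
proof (rule ccontr)
  assume "P n i d1 D \<inter> P n i d2 D \<noteq> {}"
  then obtain \<nu>1 \<tau>1 \<nu>2 \<tau>2 where a: "\<nu>1 \<in> G n i d1" "\<tau>1 \<in> multisets_of_size {i!d1<..n} (D - d1)"
    "\<nu>2 \<in> G n i d2" "\<tau>2 \<in> multisets_of_size {i!d2<..n} (D - d2)" and eq: "\<nu>1 + \<tau>1 = \<nu>2 + \<tau>2"
    unfolding P_def by auto
  have d1: "d1 < length i" using assms by simp
  have t1: "set_mset \<tau>1 \<subseteq> {i!d1<..n}" "size \<tau>1 = D - d1" using a(2) by (auto simp: multisets_of_size_def)
  have t2: "set_mset \<tau>2 \<subseteq> {i!d2<..n}" using a(4) by (auto simp: multisets_of_size_def)
  have n1: "size \<nu>1 = d1" using a(1) unfolding G_def by auto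
  have n2: "size \<nu>2 = d2" "\<forall>j<d2. sl \<nu>2 ! j \<le> i!j" using a(3) unfolding G_def by auto
  have "sl \<nu>1 @ sl \<tau>1 = sl \<nu>2 @ sl \<tau>2"
    using sl_sum[OF assms(1) d1 a(1) t1(1)] sl_sum[OF assms(1) assms(3) a(3) t2] eq by simp
  moreover have "0 < size \<tau>1" using t1(2) assms by simp
  then have "sl \<tau>1 \<noteq> []" using len_sl[of \<tau>1] by auto
  then have "sl \<tau>1 ! 0 \<in># \<tau>1" by (metis nth_mem length_greater_0_conv set_sorted_list_of_multiset)
  then have gt: "i!d1 < sl \<tau>1 ! 0" using t1(1) by auto
  ultimately have "sl \<nu>2 ! d1 = sl \<tau>1 ! 0" using len_sl[of \<nu>1] len_sl[of \<nu>2] n1 n2(1) assms(2)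
    by (metis nth_append less_irrefl diff_self_eq_0 nth_append_length_plus add_0_right)
  then show False using n2(2) assms(2) gt by fastforce
qed

lemma P_inj:
  assumes "sorted i" "d < length i"
  shows "inj_on (\<lambda>(\<nu>,\<tau>). \<nu> + \<tau>) (G n i d \<times> multisets_of_size {i!d<..n} r)"
proof (rule inj_onI, clarify)
  fix \<nu> \<tau> \<nu>' \<tau>'
  assume a: "\<nu> \<in> G n i d" "\<tau> \<in> multisets_of_size {i!d<..n} r"
    "\<nu>' \<in> G n i d" "\<tau>' \<in> multisets_of_size {i!d<..n} r" and eq: "\<nu> + \<tau> = \<nu>' + \<tau>'"
  have "sl (\<nu> + \<tau>) = sl \<nu> @ sl \<tau>"
    by (rule sl_sum[OF assms a(1)]) (use a(2) in \<open>simp add: multisets_of_size_def\<close>)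
  moreover have "sl (\<nu>' + \<tau>') = sl \<nu>' @ sl \<tau>'"
    by (rule sl_sum[OF assms a(3)]) (use a(4) in \<open>simp add: multisets_of_size_def\<close>)
  ultimately have "sl \<nu> @ sl \<tau> = sl \<nu>' @ sl \<tau>'" using eq by simp
  moreover have "length (sl \<nu>) = length (sl \<nu>')" using a(1,3) len_sl unfolding G_def by auto
  ultimately have "sl \<nu> = sl \<nu>'" "sl \<tau> = sl \<tau>'" by auto
  then show "\<nu> = \<nu>' \<and> \<tau> = \<tau>'" by (metis mset_sorted_list_of_multiset)
qed

lemma finite_G: "finite (G n i d)"
proof -
  have "G n i d \<subseteq> multisets_of_size {1..n} d" unfolding G_def multisets_of_size_def by auto
  then show ?thesis by (rule finite_subset) auto
qed

lemma card_P:
  assumes "sorted i" "d < length i"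
  shows "card (P n i d D) = card (G n i d) * ((n - i!d) + (D - d) - 1 choose (D - d))"
  unfolding P_def
  by (simp add: card_image[OF P_inj[OF assms]] card_cartesian_product card_multisets_of_size)

lemma count_main:
  assumes "sorted i" "set i \<subseteq> {1..n}"
  shows "card {\<mu> \<in> monomials n. size \<mu> = D \<and> \<mu> \<notin> Borel n (mset i)} =
    (\<Sum>d\<in>{d. d < length i \<and> d \<le> D}. card (G n i d) * ((n - i!d) + (D - d) - 1 choose (D - d)))"
proof -
  have "{\<mu> \<in> monomials n. size \<mu> = D \<and> \<mu> \<notin> Borel n (mset i)} = {\<mu> \<in> monomials n. size \<mu> = D \<and> \<not> domS i \<mu>}"
    using Borel_domS[OF assms] by auto
  also have "\<dots> = (\<Union>d\<in>{d. d < length i \<and> d \<le> D}. P n i d D)" by (rule decomp[OF assms])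
  finally have eq: "{\<mu> \<in> monomials n. size \<mu> = D \<and> \<mu> \<notin> Borel n (mset i)} = \<dots>" .
  have "card (\<Union>d\<in>{d. d < length i \<and> d \<le> D}. P n i d D) = (\<Sum>d\<in>{d. d < length i \<and> d \<le> D}. card (P n i d D))"
  proof (rule card_UN_disjoint)
    show "finite {d. d < length i \<and> d \<le> D}" by simp
    show "\<forall>d\<in>{d. d < length i \<and> d \<le> D}. finite (P n i d D)"
      unfolding P_def by (auto intro!: finite_imageI finite_cartesian_product finite_G finite_multisets_of_size)
    show "\<forall>d1\<in>{d. d < length i \<and> d \<le> D}. \<forall>d2\<in>{d. d < length i \<and> d \<le> D}. d1 \<noteq> d2 \<longrightarrow> P n i d1 D \<inter> P n i d2 D = {}"
    proof (intro ballI impI)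
      fix d1 d2 assume "d1 \<in> {d. d < length i \<and> d \<le> D}" "d2 \<in> {d. d < length i \<and> d \<le> D}" "d1 \<noteq> d2"
      then show "P n i d1 D \<inter> P n i d2 D = {}"
        using P_disjoint[OF assms(1), of d1 d2 D n] P_disjoint[OF assms(1), of d2 d1 D n]
        by (cases "d1 < d2") (auto simp: Int_commute)
    qed
  qed
  then show ?thesis unfolding eq using card_P[OF assms(1)] by simp
qed



unbundle fps_syntax

lemma inv_pow_nth: "inverse ((1 - fps_X :: rat fps) ^ k) $ r = of_nat ((k + r - 1) choose r)"
proof (cases "k = 0")
  case True then show ?thesis by (cases r) auto
next
  case False
  then show ?thesis using one_minus_const_fps_X_neg_power'[of k "1::rat"] by simp
qed

lemma U0: "((1 - fps_X :: rat fps) ^ k) $ 0 \<noteq> 0"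
  by (simp add: fps_nth_power_0)

lemma term_nth:
  "(fps_const (a::rat) * fps_X ^ d / (1 - fps_X) ^ k) $ D =
     (if d \<le> D then a * of_nat ((k + (D - d) - 1) choose (D - d)) else 0)"
proof -
  have "fps_const a * fps_X ^ d / (1 - fps_X) ^ k = fps_const a * (fps_X ^ d * inverse ((1 - fps_X) ^ k))"
    by (simp add: fps_divide_unit[OF U0] mult.assoc)
  then show ?thesis by (simp add: fps_X_power_mult_nth inv_pow_nth)
qed

lemma divU1: "(F / (1 - fps_X :: rat fps)^k) * (1 - fps_X)^k = F"
  by (simp add: fps_divide_unit[OF U0] mult.assoc inverse_mult_eq_1[OF U0])

lemma divU2: "(F * (1 - fps_X :: rat fps)^k) / (1 - fps_X)^k = F"
  by (simp add: fps_divide_unit[OF U0] mult.assoc inverse_mult_eq_1'[OF U0])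

lemma mult_unique:
  fixes H :: "rat fps"
  assumes "poly Q 1 \<noteq> 0" "H = fps_of_poly Q / (1 - fps_X)^\<delta>"
          "poly Q' 1 \<noteq> 0" "H = fps_of_poly Q' / (1 - fps_X)^\<delta>'"
  shows "poly Q' 1 = poly Q 1"
proof -
  define p :: "rat poly" where "p = 1 - [:0,1:]"
  have fp: "fps_of_poly p = 1 - fps_X" by (simp add: p_def fps_of_poly_diff)
  have p1: "poly p 1 = 0" by (simp add: p_def)
  have pnz: "p ^ k \<noteq> 0" for k
  proof -
    have "coeff p 0 = 1" by (simp add: p_def)
    then have "p \<noteq> 0" by auto
    then show ?thesis by simp
  qed
  have a: "fps_of_poly Q = H * (1 - fps_X)^\<delta>" using assms(2) divU1 by simp
  have b: "fps_of_poly Q' = H * (1 - fps_X)^\<delta>'" using assms(4) divU1 by simp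
  have "fps_of_poly (Q * p^\<delta>') = fps_of_poly (Q' * p^\<delta>)"
    by (simp add: fps_of_poly_mult fps_of_poly_power fp a b mult_ac)
  then have eq: "Q * p^\<delta>' = Q' * p^\<delta>" by (simp only: fps_of_poly_eq_iff)
  show ?thesis
  proof (cases "\<delta> \<le> \<delta>'")
    case True
    then have "Q * p^(\<delta>' - \<delta>) * p^\<delta> = Q' * p^\<delta>" using eq
      by (metis mult.assoc power_add le_add_diff_inverse2)
    then have e2: "Q * p^(\<delta>' - \<delta>) = Q'" using pnz[of \<delta>] by (metis mult_right_cancel)
    show ?thesis
    proof (cases "\<delta>' = \<delta>")
      case True then show ?thesis using e2 by simp
    next
      case False
      then have "poly Q' 1 = 0" using e2[symmetric] p1 True by (simp add: poly_mult poly_power)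
      then show ?thesis using assms(3) by simp
    qed
  next
    case False
    then have "Q * p^\<delta>' = Q' * p^(\<delta> - \<delta>') * p^\<delta>'" using eq
      by (metis mult.assoc power_add le_add_diff_inverse2 nat_le_linear)
    then have e2: "Q = Q' * p^(\<delta> - \<delta>')" using pnz[of \<delta>'] by (metis mult_right_cancel)
    then have "poly Q 1 = 0" using p1 False by (simp add: poly_mult poly_power)
    then show ?thesis using assms(1) by simp
  qed
qed

theorem proposition4p6:
  fixes n :: nat and i :: "nat list"
  assumes "i \<noteq> []" and "sorted i" and "set i \<subseteq> {1..n}"
  defines "B \<equiv> Borel n (mset i)"
      and "c \<equiv> (\<lambda>d. card {\<mu> \<in> min_gens (trunc_ideal n d (Borel n (mset i))). size \<mu> = d})"
  shows "hilbert_series n B =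
           (\<Sum>d<length i. fps_const (of_nat (c d)) * fps_X ^ d / (1 - fps_X) ^ (n - i ! d)) \<and>
         multiplicity (hilbert_series n B) = of_nat (\<Sum>d\<in>{d. d < length i \<and> i ! d = i ! 0}. c d)"
proof -
  have cG: "c d = card (G n i d)" if "d < length i" for d
    unfolding c_def using c_eq[OF assms(2,3)] that by simp
  let ?R = "(\<Sum>d<length i. fps_const (of_nat (c d)) * fps_X ^ d / (1 - fps_X) ^ (n - i ! d)) :: rat fps"
  have HS: "hilbert_series n B = ?R"
  proof (rule fps_ext)
    fix D
    let ?b = "\<lambda>d. (n - i!d) + (D - d) - 1 choose (D - d)"
    have "hilbert_series n B $ D = of_nat (card {\<mu> \<in> monomials n. size \<mu> = D \<and> \<mu> \<notin> B})"
      unfolding hilbert_series_def by simp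
    also have "\<dots> = of_nat (\<Sum>d\<in>{d. d < length i \<and> d \<le> D}. card (G n i d) * ?b d)"
      unfolding B_def using count_main[OF assms(2,3)] by simp
    also have "\<dots> = (\<Sum>d\<in>{d. d < length i \<and> d \<le> D}. of_nat (c d) * (of_nat (?b d) :: rat))"
      by (simp add: of_nat_sum cG)
    also have "{d. d < length i \<and> d \<le> D} = {d \<in> {..<length i}. d \<le> D}" by auto
    also have "(\<Sum>d\<in>{d \<in> {..<length i}. d \<le> D}. of_nat (c d) * (of_nat (?b d) :: rat)) =
        (\<Sum>d<length i. if d \<le> D then of_nat (c d) * of_nat (?b d) else 0)"
      by (rule sum.inter_filter) simp
    also have "\<dots> = ?R $ D" by (simp add: fps_sum_nth term_nth)
    finally show "hilbert_series n B $ D = ?R $ D" .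
  qed
  define p :: "rat poly" where "p = 1 - [:0,1:]"
  have fp: "fps_of_poly p = 1 - fps_X" by (simp add: p_def fps_of_poly_diff)
  have p1: "poly p 1 = 0" by (simp add: p_def)
  define \<delta> where "\<delta> = n - i!0"
  define e where "e = (\<lambda>d. i!d - i!0)"
  have bnd: "i!0 \<le> i!d \<and> i!d \<le> n" if "d < length i" for d
  proof
    show "i!0 \<le> i!d" using assms(2) that by (intro sorted_nth_mono) auto
    show "i!d \<le> n" using assms(3) that nth_mem by fastforce
  qed
  define Q where "Q = (\<Sum>d<length i. [:of_nat (c d):] * [:0,1:]^d * p^(e d))"
  have fQ: "fps_of_poly Q = (\<Sum>d<length i. fps_const (of_nat (c d)) * fps_X ^ d * (1 - fps_X)^(e d))"
    by (simp add: Q_def fps_of_poly_sum fps_of_poly_mult fps_of_poly_power fp fps_of_poly_const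
        fps_of_poly_smult mult.assoc)
  have "?R * (1 - fps_X)^\<delta> = fps_of_poly Q"
    unfolding fQ sum_distrib_right
  proof (rule sum.cong[OF refl])
    fix d assume "d \<in> {..<length i}"
    then have "\<delta> = (n - i!d) + e d" using bnd[of d] unfolding \<delta>_def e_def by auto
    then have U: "(1 - fps_X :: rat fps)^\<delta> = (1 - fps_X)^(n - i!d) * (1 - fps_X)^(e d)"
      by (simp add: power_add)
    show "fps_const (of_nat (c d) :: rat) * fps_X ^ d / (1 - fps_X) ^ (n - i ! d) * (1 - fps_X) ^ \<delta> =
         fps_const (of_nat (c d)) * fps_X ^ d * (1 - fps_X) ^ e d"
    proof -
      let ?F = "fps_const (of_nat (c d)) * fps_X ^ d :: rat fps"
      have "?F / (1 - fps_X) ^ (n - i ! d) * (1 - fps_X) ^ \<delta> =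
            (?F / (1 - fps_X) ^ (n - i ! d) * (1 - fps_X) ^ (n - i ! d)) * (1 - fps_X) ^ e d"
        by (subst U) (rule mult.assoc[symmetric])
      also have "?F / (1 - fps_X) ^ (n - i ! d) * (1 - fps_X) ^ (n - i ! d) = ?F" by (rule divU1)
      finally show ?thesis .
    qed
  qed
  then have HQ: "hilbert_series n B = fps_of_poly Q / (1 - fps_X)^\<delta>" using HS divU2 by metis
  have "poly Q 1 = (\<Sum>d<length i. of_nat (c d) * (0::rat) ^ (e d))"
    by (simp add: Q_def poly_sum poly_mult poly_power p1)
  also have "\<dots> = (\<Sum>d<length i. if i!d = i!0 then of_nat (c d) else 0)"
  proof (rule sum.cong[OF refl])
    fix d assume "d \<in> {..<length i}"
    then have "i!0 \<le> i!d" using bnd by auto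
    then show "of_nat (c d) * (0::rat) ^ (e d) = (if i!d = i!0 then of_nat (c d) else 0)"
      by (auto simp: e_def)
  qed
  also have "\<dots> = (\<Sum>d\<in>{d \<in> {..<length i}. i!d = i!0}. of_nat (c d))"
    by (rule sum.inter_filter[symmetric]) simp
  also have "{d \<in> {..<length i}. i!d = i!0} = {d. d < length i \<and> i ! d = i ! 0}" by auto
  finally have pQ: "poly Q 1 = of_nat (\<Sum>d\<in>{d. d < length i \<and> i ! d = i ! 0}. c d)"
    by (simp add: of_nat_sum)
  have c0: "c 0 = 1"
  proof -
    have "G n i 0 = {{#}}" unfolding G_def by auto
    then show ?thesis using cG[of 0] assms(1) by simp
  qed
  have "(\<Sum>d\<in>{d. d < length i \<and> i ! d = i ! 0}. c d) \<ge> c 0"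
    by (rule member_le_sum) (use assms(1) in auto)
  then have "(\<Sum>d\<in>{d. d < length i \<and> i ! d = i ! 0}. c d) \<noteq> 0" using c0 by linarith
  then have pQ0: "poly Q 1 \<noteq> 0" unfolding pQ by (metis of_nat_eq_0_iff)
  have "multiplicity (hilbert_series n B) = poly Q 1"
    unfolding multiplicity_def
  proof (rule the_equality)
    show "\<exists>Q' \<delta>'. poly Q' 1 \<noteq> 0 \<and> hilbert_series n B = fps_of_poly Q' / (1 - fps_X) ^ \<delta>' \<and> poly Q 1 = poly Q' 1"
      using pQ0 HQ by blast
    fix x assume "\<exists>Q' \<delta>'. poly Q' 1 \<noteq> 0 \<and> hilbert_series n B = fps_of_poly Q' / (1 - fps_X) ^ \<delta>' \<and> x = poly Q' 1"
    then obtain Q' \<delta>' where "poly Q' 1 \<noteq> 0" "hilbert_series n B = fps_of_poly Q' / (1 - fps_X) ^ \<delta>'" "x = poly Q' 1"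
      by blast
    then show "x = poly Q 1" using mult_unique[OF pQ0 HQ] by blast
  qed
  then show ?thesis using HS pQ by simp
qed

end
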